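(* Let $R(\bar x,\bar y)$ be a definable relation, with $\bar x=(x_1,\dots,x_k)$ and $\bar y=(y_1,\dots,y_l)$. Then there is a natural number $K$ such that for every $\bar a\in\mathcal M^k$, $$\lnot(\exists_{>K}\bar y)R(\bar a,\bar y)\ \lor\ \lnot(\exists_{>K}\bar y)\lnot R(\bar a,\bar y).$$
   Context: $\mathcal M$ denotes the $\mathbb Q$-vector space $\mathbb Q^{<\omega}$ of all sequences $(v_0,v_1,\dots)$ of rationals with only finitely many nonzero terms, with zero vector $\vec 0$, regarded as the structure $\langle\mathcal M;+\rangle$. A relation on $\mathcal M$ is definable if it is first-order definable without parameters in $\langle\mathcal M;+\rangle$. The quantifier $(\exists_{>K}y)Q(y)$ means "there are at least $K+1$ pairwise distinct $y$ with $Q(y)$"; for tuples it is defined inductively by $(\exists_{>K}y_1,\dots,y_l)Q(\bar y):=(\exists_{>K}y_1)(\exists_{>K}y_2,\dots,y_l)Q(\bar y)$. *)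

theory Defs
  imports Main "HOL.Rat"
begin

text \<open>The carrier M = Q^{<omega}: finitely supported rational sequences.\<close>
definition Mset :: "(nat \<Rightarrow> rat) set" where
  "Mset = {v. finite {i. v i \<noteq> 0}}"

definition zerovec :: "nat \<Rightarrow> rat" where
  "zerovec = (\<lambda>i. 0)"

datatype tm = Var nat | Plus tm tm

datatype fm = Eq tm tm | Neg fm | Conj fm fm | Ex nat fm

fun evalt :: "(nat \<Rightarrow> (nat \<Rightarrow> rat)) \<Rightarrow> tm \<Rightarrow> (nat \<Rightarrow> rat)" where
  "evalt e (Var n) = e n"
| "evalt e (Plus s t) = (\<lambda>i. evalt e s i + evalt e t i)"

fun sat :: "(nat \<Rightarrow> (nat \<Rightarrow> rat)) \<Rightarrow> fm \<Rightarrow> bool" where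
  "sat e (Eq s t) = (evalt e s = evalt e t)"
| "sat e (Neg f) = (\<not> sat e f)"
| "sat e (Conj f g) = (sat e f \<and> sat e g)"
| "sat e (Ex n f) = (\<exists>v\<in>Mset. sat (e(n := v)) f)"

definition env :: "nat \<Rightarrow> (nat \<Rightarrow> rat) list \<Rightarrow> (nat \<Rightarrow> rat) list \<Rightarrow> nat \<Rightarrow> (nat \<Rightarrow> rat)" where
  "env k as bs = (\<lambda>i. if i < k then as ! i
                      else if i - k < length bs then bs ! (i - k) else zerovec)"

definition definable :: "nat \<Rightarrow> nat \<Rightarrow> ((nat \<Rightarrow> rat) list \<Rightarrow> (nat \<Rightarrow> rat) list \<Rightarrow> bool) \<Rightarrow> bool" where
  "definable k l R = (\<exists>\<phi>. \<forall>as bs. set as \<subseteq> Mset \<longrightarrow> length as = k \<longrightarrow>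
        set bs \<subseteq> Mset \<longrightarrow> length bs = l \<longrightarrow> (R as bs \<longleftrightarrow> sat (env k as bs) \<phi>))"

text \<open>The counting quantifier (exists_{>K} y_1..y_l) Q(y), defined inductively on l.\<close>
fun exgt :: "nat \<Rightarrow> nat \<Rightarrow> ((nat \<Rightarrow> rat) list \<Rightarrow> bool) \<Rightarrow> bool" where
  "exgt K 0 Q = Q []"
| "exgt K (Suc l) Q = (\<exists>S. S \<subseteq> Mset \<and> finite S \<and> card S = K + 1 \<and>
                          (\<forall>y\<in>S. exgt K l (\<lambda>ys. Q (y # ys))))"

end

theory Submission
  imports Defs
begin

type_synonym lf = "(int \<times> nat) list"

fun lval :: "lf \<Rightarrow> (nat \<Rightarrow> (nat \<Rightarrow> rat)) \<Rightarrow> nat \<Rightarrow> rat" where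
  "lval [] e i = 0"
| "lval ((c,v)#L) e i = of_int c * e v i + lval L e i"

fun coef :: "nat \<Rightarrow> lf \<Rightarrow> int" where
  "coef x [] = 0"
| "coef x ((c,v)#L) = (if v = x then c else 0) + coef x L"

definition rest :: "nat \<Rightarrow> lf \<Rightarrow> lf" where
  "rest x L = filter (\<lambda>p. snd p \<noteq> x) L"

definition scale :: "int \<Rightarrow> lf \<Rightarrow> lf" where
  "scale a L = map (\<lambda>(c,v). (a*c, v)) L"

lemma lval_append[simp]: "lval (L1 @ L2) e i = lval L1 e i + lval L2 e i"
  by (induction L1) auto

lemma lval_scale[simp]: "lval (scale a L) e i = of_int a * lval L e i"
  by (induction L) (auto simp: scale_def algebra_simps)

lemma lval_split: "lval L e i = of_int (coef x L) * e x i + lval (rest x L) e i"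
  by (induction L) (auto simp: rest_def algebra_simps)

lemma lval_rest_upd[simp]: "lval (rest x L) (e(x:=v)) i = lval (rest x L) e i"
  by (induction L) (auto simp: rest_def)

lemma lval_supp: "(\<forall>n. e n \<in> Mset) \<Longrightarrow> finite {i. lval L e i \<noteq> 0}"
proof (induction L)
  case Nil then show ?case by simp
next
  case (Cons p L)
  obtain c v where p: "p = (c,v)" by force
  have "{i. lval (p#L) e i \<noteq> 0} \<subseteq> {i. e v i \<noteq> 0} \<union> {i. lval L e i \<noteq> 0}"
    by (auto simp: p)
  moreover have "finite {i. e v i \<noteq> 0}" using Cons.prems by (auto simp: Mset_def)
  ultimately show ?case using Cons by (meson finite_Un finite_subset)
qed

datatype qf = At lf | Fls | N qf | C qf qf

fun qsat :: "(nat \<Rightarrow> (nat \<Rightarrow> rat)) \<Rightarrow> qf \<Rightarrow> bool" where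
  "qsat e (At L) = (\<forall>i. lval L e i = 0)"
| "qsat e Fls = False"
| "qsat e (N f) = (\<not> qsat e f)"
| "qsat e (C f g) = (qsat e f \<and> qsat e g)"

fun atoms :: "qf \<Rightarrow> lf list" where
  "atoms (At L) = [L]"
| "atoms Fls = []"
| "atoms (N f) = atoms f"
| "atoms (C f g) = atoms f @ atoms g"

fun gen :: "nat \<Rightarrow> qf \<Rightarrow> qf" where
  "gen x (At L) = (if coef x L \<noteq> 0 then Fls else At L)"
| "gen x Fls = Fls"
| "gen x (N f) = N (gen x f)"
| "gen x (C f g) = C (gen x f) (gen x g)"

fun subst :: "nat \<Rightarrow> lf \<Rightarrow> qf \<Rightarrow> qf" where
  "subst x Lj (At L) = At (scale (coef x Lj) (rest x L) @ scale (- coef x L) (rest x Lj))"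
| "subst x Lj Fls = Fls"
| "subst x Lj (N f) = N (subst x Lj f)"
| "subst x Lj (C f g) = C (subst x Lj f) (subst x Lj g)"

definition cand :: "(nat \<Rightarrow> (nat \<Rightarrow> rat)) \<Rightarrow> nat \<Rightarrow> lf \<Rightarrow> (nat \<Rightarrow> rat)" where
  "cand e x L = (\<lambda>i. - lval (rest x L) e i / of_int (coef x L))"

lemma subst_sem:
  assumes "coef x Lj \<noteq> 0"
  shows "qsat e (subst x Lj f) = qsat (e(x := cand e x Lj)) f"
proof (induction f)
  case (At L)
  have "\<And>i. (lval L (e(x := cand e x Lj)) i = 0) =
     (of_int (coef x Lj) * lval (rest x L) e i + of_int (- coef x L) * lval (rest x Lj) e i = 0)"
  proof -
    fix i
    have "lval L (e(x := cand e x Lj)) i = of_int (coef x L) * cand e x Lj i + lval (rest x L) e i"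
      by (subst lval_split[of _ _ _ x]) simp
    also have "\<dots> = (of_int (coef x Lj) * lval (rest x L) e i + of_int (- coef x L) * lval (rest x Lj) e i) / of_int (coef x Lj)"
      using assms by (simp add: cand_def field_simps)
    finally show "?thesis i" using assms by simp
  qed
  then show ?case by (simp only: qsat.simps subst.simps lval_append lval_scale)
qed auto

lemma gen_sem:
  assumes "\<forall>L\<in>set (atoms f). coef x L \<noteq> 0 \<longrightarrow> v \<noteq> cand e x L"
  shows "qsat (e(x:=v)) f = qsat e (gen x f)"
  using assms
proof (induction f)
  case (At L)
  show ?case
  proof (cases "coef x L = 0")
    case True
    have "\<And>i. lval L (e(x:=v)) i = lval L e i"
      using lval_split[of L "e(x:=v)" _ x] lval_split[of L e _ x] True by simp
    then show ?thesis using True by (simp only: qsat.simps gen.simps if_False) simp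
  next
    case False
    with At have "v \<noteq> cand e x L" by simp
    then obtain i where i: "v i \<noteq> cand e x L i" by auto
    have "lval L (e(x:=v)) i \<noteq> 0"
    proof
      assume "lval L (e(x:=v)) i = 0"
      then have "of_int (coef x L) * v i + lval (rest x L) e i = 0"
        using lval_split[of L "e(x:=v)" i x] by simp
      then have "v i = cand e x L i" using False by (simp add: cand_def field_simps)
      with i show False by simp
    qed
    then show ?thesis using False by (simp only: qsat.simps gen.simps if_True not_False_eq_True) blast
  qed
qed auto

definition Or :: "qf \<Rightarrow> qf \<Rightarrow> qf" where "Or a b = N (C (N a) (N b))"

definition qe_ex :: "nat \<Rightarrow> qf \<Rightarrow> qf" where
  "qe_ex x q = foldr (\<lambda>L acc. Or (subst x L q) acc) (filter (\<lambda>L. coef x L \<noteq> 0) (atoms q)) (gen x q)"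

lemma foldr_or: "qsat e (foldr (\<lambda>L acc. Or (subst x L q) acc) Ls g) =
   (qsat e g \<or> (\<exists>L\<in>set Ls. qsat e (subst x L q)))"
  by (induction Ls) (auto simp: Or_def)

lemma cand_Mset: "(\<forall>n. e n \<in> Mset) \<Longrightarrow> cand e x L \<in> Mset"
proof -
  assume a: "\<forall>n. e n \<in> Mset"
  have "{i. cand e x L i \<noteq> 0} \<subseteq> {i. lval (rest x L) e i \<noteq> 0}" by (auto simp: cand_def)
  then show ?thesis using lval_supp[OF a] by (auto simp: Mset_def intro: finite_subset)
qed

lemma Mset_infinite: "infinite Mset"
proof -
  let ?f = "\<lambda>n::nat. (\<lambda>i. if i = n then (1::rat) else 0)"
  have "inj ?f" by (rule injI) (metis zero_neq_one)
  moreover have "range ?f \<subseteq> Mset" by (auto simp: Mset_def)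
  ultimately show ?thesis by (meson finite_imageD finite_subset infinite_UNIV_nat)
qed

lemma avoid: "finite A \<Longrightarrow> \<exists>v\<in>Mset. v \<notin> A"
  using Mset_infinite by (meson finite_subset subsetI)

lemma qe_ex_sem:
  assumes "\<forall>n. e n \<in> Mset"
  shows "(\<exists>v\<in>Mset. qsat (e(x:=v)) q) = qsat e (qe_ex x q)"
proof
  assume "\<exists>v\<in>Mset. qsat (e(x:=v)) q"
  then obtain v where v: "v \<in> Mset" "qsat (e(x:=v)) q" by blast
  show "qsat e (qe_ex x q)"
  proof (cases "\<exists>L\<in>set (atoms q). coef x L \<noteq> 0 \<and> v = cand e x L")
    case True
    then obtain L where L: "L \<in> set (atoms q)" "coef x L \<noteq> 0" "v = cand e x L" by blast
    then have "qsat e (subst x L q)" using subst_sem[OF L(2)] v by simp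
    then show ?thesis using L by (auto simp: qe_ex_def foldr_or)
  next
    case False
    then have "qsat e (gen x q)" using gen_sem[of q x v e] v by auto
    then show ?thesis by (auto simp: qe_ex_def foldr_or)
  qed
next
  assume "qsat e (qe_ex x q)"
  then have "qsat e (gen x q) \<or> (\<exists>L\<in>set (atoms q). coef x L \<noteq> 0 \<and> qsat e (subst x L q))"
    by (auto simp: qe_ex_def foldr_or)
  then show "\<exists>v\<in>Mset. qsat (e(x:=v)) q"
  proof
    assume g: "qsat e (gen x q)"
    obtain v where v: "v \<in> Mset" "v \<notin> cand e x ` set (atoms q)"
      using avoid[of "cand e x ` set (atoms q)"] by blast
    then have "qsat (e(x:=v)) q" using gen_sem[of q x v e] g by auto
    then show ?thesis using v by blast
  next
    assume "\<exists>L\<in>set (atoms q). coef x L \<noteq> 0 \<and> qsat e (subst x L q)"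
    then obtain L where "coef x L \<noteq> 0" "qsat e (subst x L q)" by blast
    then show ?thesis using subst_sem cand_Mset[OF assms] by blast
  qed
qed

fun lin :: "tm \<Rightarrow> lf" where
  "lin (Var n) = [(1,n)]"
| "lin (Plus s t) = lin s @ lin t"

lemma lin_sem: "lval (lin t) e i = evalt e t i"
  by (induction t) auto

lemma qe: "\<exists>q. \<forall>e. (\<forall>n. e n \<in> Mset) \<longrightarrow> sat e \<phi> = qsat e q"
proof (induction \<phi>)
  case (Eq s t)
  have "\<forall>e. sat e (Eq s t) = qsat e (At (lin s @ scale (-1) (lin t)))"
    by (auto simp: lin_sem fun_eq_iff)
  then show ?case by blast
next
  case (Neg f)
  then obtain q where "\<forall>e. (\<forall>n. e n \<in> Mset) \<longrightarrow> sat e f = qsat e q" by blast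
  then have "\<forall>e. (\<forall>n. e n \<in> Mset) \<longrightarrow> sat e (Neg f) = qsat e (N q)" by simp
  then show ?case by blast
next
  case (Conj f g)
  then obtain q1 q2 where "\<forall>e. (\<forall>n. e n \<in> Mset) \<longrightarrow> sat e f = qsat e q1"
    "\<forall>e. (\<forall>n. e n \<in> Mset) \<longrightarrow> sat e g = qsat e q2" by blast
  then have "\<forall>e. (\<forall>n. e n \<in> Mset) \<longrightarrow> sat e (Conj f g) = qsat e (C q1 q2)" by simp
  then show ?case by blast
next
  case (Ex x f)
  then obtain q where q: "\<forall>e. (\<forall>n. e n \<in> Mset) \<longrightarrow> sat e f = qsat e q" by blast
  have "\<forall>e. (\<forall>n. e n \<in> Mset) \<longrightarrow> sat e (Ex x f) = qsat e (qe_ex x q)"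
  proof (intro allI impI)
    fix e :: "nat \<Rightarrow> nat \<Rightarrow> rat" assume e: "\<forall>n. e n \<in> Mset"
    have "sat e (Ex x f) = (\<exists>v\<in>Mset. qsat (e(x:=v)) q)"
      using q e by auto
    then show "sat e (Ex x f) = qsat e (qe_ex x q)" using qe_ex_sem[OF e] by simp
  qed
  then show ?case by blast
qed

fun G :: "nat \<Rightarrow> nat \<Rightarrow> qf \<Rightarrow> qf" where
  "G k 0 q = q"
| "G k (Suc l) q = gen k (G (Suc k) l q)"

lemma gen_atoms: "length (atoms (gen x f)) \<le> length (atoms f)"
  by (induction f) auto

lemma G_atoms: "length (atoms (G k l q)) \<le> length (atoms q)"
  by (induction l arbitrary: k) (auto intro: le_trans[OF gen_atoms])

lemma G_N: "G k l (N q) = N (G k l q)"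
  by (induction l arbitrary: k) auto

lemma env_cons: "length as = k \<Longrightarrow> env k as (y#ys) = env (Suc k) (as@[y]) ys"
  by (auto simp: env_def fun_eq_iff nth_append)

lemma env_upd: "length as = k \<Longrightarrow> (env k as [])(k := y) = env (Suc k) (as@[y]) []"
  by (auto simp: env_def fun_eq_iff nth_append)

lemma count:
  "length as = k \<Longrightarrow> set as \<subseteq> Mset \<Longrightarrow> length (atoms q) \<le> K \<Longrightarrow>
   exgt K l (\<lambda>bs. qsat (env k as bs) q) \<Longrightarrow> qsat (env k as []) (G k l q)"
proof (induction l arbitrary: k as)
  case 0 then show ?case by simp
next
  case (Suc l)
  from Suc.prems(4) obtain S where S: "S \<subseteq> Mset" "finite S" "card S = K + 1"
    "\<forall>y\<in>S. exgt K l (\<lambda>ys. qsat (env k as (y#ys)) q)" by auto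
  let ?e = "env k as []"
  let ?q = "G (Suc k) l q"
  have hy: "qsat (?e(k:=y)) ?q" if y: "y \<in> S" for y
  proof -
    have "exgt K l (\<lambda>ys. qsat (env (Suc k) (as@[y]) ys) q)"
      using S(4) y env_cons[OF Suc.prems(1)] by simp
    then have "qsat (env (Suc k) (as@[y]) []) ?q"
      using Suc.IH[of "as@[y]" "Suc k"] Suc.prems y S(1) by auto
    then show ?thesis using env_upd[OF Suc.prems(1)] by simp
  qed
  let ?C = "cand ?e k ` set (atoms ?q)"
  have "card ?C \<le> K"
    using card_image_le[of "set (atoms ?q)" "cand ?e k"] card_length[of "atoms ?q"]
      G_atoms[of "Suc k" l q] Suc.prems(3) by simp
  then have "\<not> S \<subseteq> ?C" using S(3) card_mono[of ?C S] by fastforce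
  then obtain y where y: "y \<in> S" "y \<notin> ?C" by blast
  have "qsat ?e (gen k ?q)" using gen_sem[of ?q k y ?e] y hy by auto
  then show ?case by simp
qed

lemma exgt_cong:
  "(\<forall>bs. set bs \<subseteq> Mset \<longrightarrow> length bs = l \<longrightarrow> Q bs = Q' bs) \<Longrightarrow> exgt K l Q = exgt K l Q'"
proof (induction l arbitrary: Q Q')
  case 0 then show ?case by simp
next
  case (Suc l)
  have "\<And>y. y \<in> Mset \<Longrightarrow> exgt K l (\<lambda>ys. Q (y#ys)) = exgt K l (\<lambda>ys. Q' (y#ys))"
    using Suc by (intro Suc.IH) auto
  then show ?case by simp (meson subsetD)
qed

lemma env_Mset: "length as = k \<Longrightarrow> set as \<subseteq> Mset \<Longrightarrow> set bs \<subseteq> Mset \<Longrightarrow> env k as bs n \<in> Mset"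
  by (auto simp: env_def zerovec_def Mset_def subset_iff)

theorem mainTheorem1:
  fixes k l :: nat and R :: "(nat \<Rightarrow> rat) list \<Rightarrow> (nat \<Rightarrow> rat) list \<Rightarrow> bool"
  assumes "definable k l R"
  shows "\<exists>K::nat. \<forall>as. set as \<subseteq> Mset \<longrightarrow> length as = k \<longrightarrow>
           (\<not> exgt K l (\<lambda>bs. R as bs) \<or> \<not> exgt K l (\<lambda>bs. \<not> R as bs))"
proof -
  obtain \<phi> where phi: "\<forall>as bs. set as \<subseteq> Mset \<longrightarrow> length as = k \<longrightarrow>
        set bs \<subseteq> Mset \<longrightarrow> length bs = l \<longrightarrow> (R as bs \<longleftrightarrow> sat (env k as bs) \<phi>)"
    using assms by (auto simp: definable_def)
  obtain q where q: "\<forall>e. (\<forall>n. e n \<in> Mset) \<longrightarrow> sat e \<phi> = qsat e q" using qe by blast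
  have "\<forall>as. set as \<subseteq> Mset \<longrightarrow> length as = k \<longrightarrow>
           (\<not> exgt (length (atoms q)) l (\<lambda>bs. R as bs) \<or> \<not> exgt (length (atoms q)) l (\<lambda>bs. \<not> R as bs))"
  proof (intro allI impI)
    fix as assume as: "set as \<subseteq> Mset" "length as = k"
    have eq: "R as bs = qsat (env k as bs) q" if "set bs \<subseteq> Mset" "length bs = l" for bs
      using phi q env_Mset[OF as(2) as(1) that(1)] as that by blast
    show "\<not> exgt (length (atoms q)) l (\<lambda>bs. R as bs) \<or> \<not> exgt (length (atoms q)) l (\<lambda>bs. \<not> R as bs)"
    proof (rule ccontr)
      assume "\<not> ?thesis"
      then have a: "exgt (length (atoms q)) l (\<lambda>bs. qsat (env k as bs) q)"
        and b: "exgt (length (atoms q)) l (\<lambda>bs. qsat (env k as bs) (N q))"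
        using exgt_cong[of l "\<lambda>bs. R as bs" "\<lambda>bs. qsat (env k as bs) q"]
          exgt_cong[of l "\<lambda>bs. \<not> R as bs" "\<lambda>bs. qsat (env k as bs) (N q)"] eq by auto
      have "qsat (env k as []) (G k l q)" using count[OF as(2) as(1) _ a] by simp
      moreover have "qsat (env k as []) (G k l (N q))" using count[OF as(2) as(1) _ b] by simp
      ultimately show False by (simp add: G_N)
    qed
  qed
  then show ?thesis by blast
qed

end
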